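(* For every integer $k\ge 1$ there exists an acyclic temporal network $N=((V\cup \{s\},A),\tau)$ such that $\lambda_{N}(s,v)\ge k$ for all $v\in V$, but $N$ contains no two arc-disjoint spanning $\tau$-respecting $s$-arborescences.
   Context: A temporal network is a pair $N=(D,\tau)$ where $D=(V\cup\{s\},A)$ is a directed graph (parallel arcs allowed) with root $s$ entered by no arc, and $\tau:A\to\mathbb{N}$; it is acyclic if $D$ has no directed cycle. A directed path with arcs $a_1,\dots,a_\ell$ in order is $\tau$-respecting if $\tau(a_1)\le\dots\le\tau(a_\ell)$; $\lambda_N(s,v)$ is the maximum number of pairwise arc-disjoint $\tau$-respecting $(s,v)$-paths. An $s$-arborescence is an acyclic subgraph $F=(V'\cup\{s\},A')$ in which every vertex of $V'$ has in-degree exactly $1$; it is spanning if $V'=V$, and $\tau$-respecting if every path in $F$ from $s$ is $\tau$-respecting. *)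

theory Defs
  imports Main
begin

(* A temporal network N = ((V \<union> {s}, A), \<tau>): vertex set V, root s \<notin> V,
   finite arc set A of arc identifiers (parallel arcs = distinct identifiers),
   each arc a has tail (tail a) and head (head a); time labels \<tau> a :: nat. *)

definition temporal_network ::
  "'v set \<Rightarrow> 'v \<Rightarrow> 'a set \<Rightarrow> ('a \<Rightarrow> 'v) \<Rightarrow> ('a \<Rightarrow> 'v) \<Rightarrow> bool" where
  "temporal_network V s A tail head \<longleftrightarrow>
     finite V \<and> finite A \<and> s \<notin> V \<and>
     (\<forall>a\<in>A. tail a \<in> V \<union> {s} \<and> head a \<in> V \<union> {s} \<and> head a \<noteq> s)"

definition is_walk :: "'a set \<Rightarrow> ('a \<Rightarrow> 'v) \<Rightarrow> ('a \<Rightarrow> 'v) \<Rightarrow> 'a list \<Rightarrow> bool" where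
  "is_walk B tail head as \<longleftrightarrow> as \<noteq> [] \<and> set as \<subseteq> B \<and>
     (\<forall>i. Suc i < length as \<longrightarrow> head (as ! i) = tail (as ! Suc i))"

definition is_path :: "'a set \<Rightarrow> ('a \<Rightarrow> 'v) \<Rightarrow> ('a \<Rightarrow> 'v) \<Rightarrow> 'a list \<Rightarrow> bool" where
  "is_path B tail head as \<longleftrightarrow> is_walk B tail head as \<and>
     distinct (tail (List.hd as) # map head as)"

definition has_cycle :: "'a set \<Rightarrow> ('a \<Rightarrow> 'v) \<Rightarrow> ('a \<Rightarrow> 'v) \<Rightarrow> bool" where
  "has_cycle B tail head \<longleftrightarrow>
     (\<exists>as. is_walk B tail head as \<and> head (last as) = tail (List.hd as))"

definition acyclic_graph :: "'a set \<Rightarrow> ('a \<Rightarrow> 'v) \<Rightarrow> ('a \<Rightarrow> 'v) \<Rightarrow> bool" where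
  "acyclic_graph B tail head \<longleftrightarrow> \<not> has_cycle B tail head"

definition tau_respecting :: "('a \<Rightarrow> nat) \<Rightarrow> 'a list \<Rightarrow> bool" where
  "tau_respecting \<tau> as \<longleftrightarrow> sorted (map \<tau> as)"

definition is_st_path ::
  "'a set \<Rightarrow> ('a \<Rightarrow> 'v) \<Rightarrow> ('a \<Rightarrow> 'v) \<Rightarrow> 'v \<Rightarrow> 'v \<Rightarrow> 'a list \<Rightarrow> bool" where
  "is_st_path B tail head x y as \<longleftrightarrow>
     is_path B tail head as \<and> tail (List.hd as) = x \<and> head (last as) = y"

definition temporal_lambda ::
  "'a set \<Rightarrow> ('a \<Rightarrow> 'v) \<Rightarrow> ('a \<Rightarrow> 'v) \<Rightarrow> ('a \<Rightarrow> nat) \<Rightarrow> 'v \<Rightarrow> 'v \<Rightarrow> nat" where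
  "temporal_lambda A tail head \<tau> s v = Sup {k. \<exists>P :: nat \<Rightarrow> 'a list.
      (\<forall>i<k. is_st_path A tail head s v (P i) \<and> tau_respecting \<tau> (P i)) \<and>
      (\<forall>i<k. \<forall>j<k. i \<noteq> j \<longrightarrow> set (P i) \<inter> set (P j) = {})}"

definition s_arborescence ::
  "'v set \<Rightarrow> 'v \<Rightarrow> 'a set \<Rightarrow> ('a \<Rightarrow> 'v) \<Rightarrow> ('a \<Rightarrow> 'v) \<Rightarrow> 'v set \<Rightarrow> 'a set \<Rightarrow> bool" where
  "s_arborescence V s A tail head V' A' \<longleftrightarrow>
     V' \<subseteq> V \<and> A' \<subseteq> A \<and>
     (\<forall>a\<in>A'. tail a \<in> V' \<union> {s} \<and> head a \<in> V' \<union> {s}) \<and>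
     acyclic_graph A' tail head \<and>
     (\<forall>v\<in>V'. card {a\<in>A'. head a = v} = 1)"

definition spanning_arborescence ::
  "'v set \<Rightarrow> 'v \<Rightarrow> 'a set \<Rightarrow> ('a \<Rightarrow> 'v) \<Rightarrow> ('a \<Rightarrow> 'v) \<Rightarrow> 'a set \<Rightarrow> bool" where
  "spanning_arborescence V s A tail head A' \<longleftrightarrow> s_arborescence V s A tail head V A'"

definition tau_respecting_arborescence ::
  "'v \<Rightarrow> 'a set \<Rightarrow> ('a \<Rightarrow> 'v) \<Rightarrow> ('a \<Rightarrow> 'v) \<Rightarrow> ('a \<Rightarrow> nat) \<Rightarrow> bool" where
  "tau_respecting_arborescence s A' tail head \<tau> \<longleftrightarrow>
     (\<forall>as. is_path A' tail head as \<and> tail (List.hd as) = s \<longrightarrow> tau_respecting \<tau> as)"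

end

theory Submission
  imports Defs "HOL-Library.Nat_Bijection"
begin

lemma walk_rank:
  assumes "is_walk B tail head as" "\<forall>a\<in>B. (r::'v\<Rightarrow>nat) (tail a) < r (head a)"
  shows "r (tail (hd as)) < r (head (last as))"
  using assms
proof (induction as)
  case Nil then show ?case by (simp add: is_walk_def)
next
  case (Cons a rest)
  show ?case
  proof (cases "rest = []")
    case True then show ?thesis using Cons.prems by (auto simp: is_walk_def)
  next
    case False
    have C: "\<forall>i. Suc i < length (a#rest) \<longrightarrow> head ((a#rest) ! i) = tail ((a#rest) ! Suc i)"
      and S: "set (a#rest) \<subseteq> B" using Cons.prems(1) unfolding is_walk_def by blast+
    have "\<forall>i. Suc i < length rest \<longrightarrow> head (rest ! i) = tail (rest ! Suc i)"
    proof (intro allI impI)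
      fix i assume "Suc i < length rest"
      then have "Suc (Suc i) < length (a#rest)" by simp
      then have "head ((a#rest) ! Suc i) = tail ((a#rest) ! Suc (Suc i))" using C by blast
      then show "head (rest ! i) = tail (rest ! Suc i)" by simp
    qed
    then have w: "is_walk B tail head rest" using S False unfolding is_walk_def by simp
    have "head ((a#rest) ! 0) = tail ((a#rest) ! Suc 0)" using C[rule_format, of 0] False by simp
    then have h: "head a = tail (hd rest)" using False by (simp add: hd_conv_nth)
    have "r (tail a) < r (head a)" using Cons.prems by (auto simp: is_walk_def)
    with Cons.IH[OF w Cons.prems(2)] h False show ?thesis by simp
  qed
qed

lemma acyc_rank:
  assumes "\<forall>a\<in>B. (r::'v\<Rightarrow>nat) (tail a) < r (head a)"
  shows "acyclic_graph B tail head"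
  unfolding acyclic_graph_def has_cycle_def
  using walk_rank[where r=r, OF _ assms] by (metis less_irrefl)

lemma lambda_ge:
  assumes fin: "finite A"
    and P: "\<forall>i<k. is_st_path A tail head s v (P i) \<and> tau_respecting \<tau> (P i)"
    and D: "\<forall>i<k. \<forall>j<k. i \<noteq> j \<longrightarrow> set (P i) \<inter> set (P j) = {}"
  shows "k \<le> temporal_lambda A tail head \<tau> s v"
  unfolding temporal_lambda_def
proof (rule cSup_upper)
  show "k \<in> {k. \<exists>P :: nat \<Rightarrow> 'a list.
      (\<forall>i<k. is_st_path A tail head s v (P i) \<and> tau_respecting \<tau> (P i)) \<and>
      (\<forall>i<k. \<forall>j<k. i \<noteq> j \<longrightarrow> set (P i) \<inter> set (P j) = {})}" using P D by blast
  show "bdd_above {k. \<exists>P :: nat \<Rightarrow> 'a list.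
      (\<forall>i<k. is_st_path A tail head s v (P i) \<and> tau_respecting \<tau> (P i)) \<and>
      (\<forall>i<k. \<forall>j<k. i \<noteq> j \<longrightarrow> set (P i) \<inter> set (P j) = {})}"
    unfolding bdd_above_def
  proof (intro exI[of _ "card A"] ballI)
    fix k' assume "k' \<in> {k. \<exists>P :: nat \<Rightarrow> 'a list.
      (\<forall>i<k. is_st_path A tail head s v (P i) \<and> tau_respecting \<tau> (P i)) \<and>
      (\<forall>i<k. \<forall>j<k. i \<noteq> j \<longrightarrow> set (P i) \<inter> set (P j) = {})}"
    then obtain Q where Q1: "\<forall>i<k'. is_st_path A tail head s v (Q i)"
      and Q2: "\<forall>i<k'. \<forall>j<k'. i \<noteq> j \<longrightarrow> set (Q i) \<inter> set (Q j) = {}" by blast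
    have ne: "\<And>i. i < k' \<Longrightarrow> Q i \<noteq> [] \<and> set (Q i) \<subseteq> A"
      using Q1 by (auto simp: is_st_path_def is_path_def is_walk_def)
    have "inj_on (\<lambda>i. hd (Q i)) {..<k'}"
    proof (rule inj_onI)
      fix i j assume "i \<in> {..<k'}" "j \<in> {..<k'}" "hd (Q i) = hd (Q j)"
      then show "i = j" using Q2 ne by (metis disjoint_iff hd_in_set lessThan_iff)
    qed
    moreover have "(\<lambda>i. hd (Q i)) ` {..<k'} \<subseteq> A" using ne by (auto intro: hd_in_set)
    ultimately have "card {..<k'} \<le> card A" using card_inj_on_le fin by blast
    then show "k' \<le> card A" by simp
  qed
qed


definition tok :: "nat \<Rightarrow> nat" where "tok i = Suc (prod_encode (0,i))"
definition ysub :: "nat \<Rightarrow> nat" where "ysub n = Suc (prod_encode (1,n))"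
definition early :: "nat \<Rightarrow> nat" where "early i = prod_encode (0,i)"
definition late :: "nat \<Rightarrow> nat \<Rightarrow> nat" where "late i j = prod_encode (1, prod_encode (i,j))"
definition mid :: "nat \<Rightarrow> nat \<Rightarrow> nat" where "mid i n = prod_encode (2, prod_encode (i,n))"
definition hdf :: "nat \<Rightarrow> nat" where
  "hdf a = (case prod_decode a of (t,p) \<Rightarrow> if t = 0 then tok p else if t = 1 then tok (fst (prod_decode p))
            else ysub (snd (prod_decode p)))"
definition tlf :: "nat \<Rightarrow> nat" where
  "tlf a = (case prod_decode a of (t,p) \<Rightarrow> if t = 2 then tok (fst (prod_decode p)) else 0)"
definition tauf :: "nat \<Rightarrow> nat" where
  "tauf a = (if fst (prod_decode a) = 0 then 0 else if fst (prod_decode a) = 1 then 2 else 1)"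
definition Fam :: "nat \<Rightarrow> nat set" where
  "Fam k = set_encode ` {S. S \<subseteq> {..<2*k-1} \<and> card S = k}"
definition VV :: "nat \<Rightarrow> nat set" where
  "VV k = tok ` {..<2*k-1} \<union> ysub ` Fam k"
definition AA :: "nat \<Rightarrow> nat set" where
  "AA k = early ` {..<2*k-1} \<union> (\<lambda>(i,j). late i j) ` ({..<2*k-1} \<times> {..<k-1})
     \<union> (\<lambda>(n,i). mid i n) ` (SIGMA n:Fam k. set_decode n)"
definition rk :: "nat \<Rightarrow> nat" where
  "rk v = (if v = 0 then 0 else if fst (prod_decode (v - 1)) = 0 then 1 else 2)"

lemma basic[simp]:
  "hdf (early i) = tok i" "hdf (late i j) = tok i" "hdf (mid i n) = ysub n"
  "tlf (early i) = 0" "tlf (late i j) = 0" "tlf (mid i n) = tok i"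
  "tauf (early i) = 0" "tauf (late i j) = 2" "tauf (mid i n) = 1"
  "tok i \<noteq> 0" "ysub n \<noteq> 0" "tok i = tok i' \<longleftrightarrow> i = i'" "ysub n = ysub n' \<longleftrightarrow> n = n'"
  "tok i \<noteq> ysub n" "ysub n \<noteq> tok i"
  "rk 0 = 0" "rk (tok i) = 1" "rk (ysub n) = 2"
  "early i = early i' \<longleftrightarrow> i = i'" "late i j = late i' j' \<longleftrightarrow> i = i' \<and> j = j'"
  "mid i n = mid i' n' \<longleftrightarrow> i = i' \<and> n = n'"
  "early i \<noteq> late i' j'" "early i \<noteq> mid i' n'" "late i j \<noteq> mid i' n'"
  "late i' j' \<noteq> early i" "mid i' n' \<noteq> early i" "mid i' n' \<noteq> late i j"
  by (auto simp: hdf_def tlf_def tauf_def tok_def ysub_def early_def late_def mid_def rk_def)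

lemma fin_Fam: "finite (Fam k)"
  unfolding Fam_def by (rule finite_imageI, rule finite_subset[of _ "Pow {..<2*k-1}"]) auto

lemma Fam_dec: "n \<in> Fam k \<Longrightarrow> set_decode n \<subseteq> {..<2*k-1} \<and> card (set_decode n) = k \<and> finite (set_decode n)"
proof -
  assume "n \<in> Fam k"
  then obtain S where S: "n = set_encode S" "S \<subseteq> {..<2*k-1}" "card S = k" unfolding Fam_def by blast
  then have "finite S" using finite_subset by blast
  then show ?thesis using S by simp
qed

lemma AA_cases:
  assumes "a \<in> AA k"
  obtains (e) i where "i<2*k-1" "a = early i"
   | (l) i j where "i<2*k-1" "j < k-1" "a = late i j"
   | (m) n i where "n \<in> Fam k" "i \<in> set_decode n" "a = mid i n"
  using assms unfolding AA_def by auto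

lemma early_in: "i<2*k-1 \<Longrightarrow> early i \<in> AA k" unfolding AA_def by blast
lemma late_in: "i<2*k-1 \<Longrightarrow> j<k-1 \<Longrightarrow> late i j \<in> AA k" unfolding AA_def by blast
lemma mid_in: "n \<in> Fam k \<Longrightarrow> i \<in> set_decode n \<Longrightarrow> mid i n \<in> AA k"
  unfolding AA_def by (rule UnI2, rule image_eqI[where x="(n,i)"]) auto

lemma tok_in: "i<2*k-1 \<Longrightarrow> tok i \<in> VV k" unfolding VV_def by blast
lemma y_in: "n \<in> Fam k \<Longrightarrow> ysub n \<in> VV k" unfolding VV_def by blast

lemma network: "temporal_network (VV k) 0 (AA k) tlf hdf"
  unfolding temporal_network_def
proof (intro conjI)
  show "finite (VV k)" using fin_Fam by (simp add: VV_def)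
  show "finite (AA k)" using fin_Fam unfolding AA_def
    by (intro finite_UnI finite_imageI finite_SigmaI) auto
  show "0 \<notin> VV k" by (auto simp: VV_def)
  show "\<forall>a\<in>AA k. tlf a \<in> VV k \<union> {0} \<and> hdf a \<in> VV k \<union> {0} \<and> hdf a \<noteq> 0"
  proof
  fix a assume "a \<in> AA k"
  then show "tlf a \<in> VV k \<union> {0} \<and> hdf a \<in> VV k \<union> {0} \<and> hdf a \<noteq> 0"
  proof (cases rule: AA_cases)
    case (e i) then show ?thesis by (simp add: tok_in)
  next
    case (l i j) then show ?thesis by (simp add: tok_in)
  next
    case (m n i)
    then have "i < 2*k-1" using Fam_dec by blast
    with m show ?thesis by (simp add: tok_in y_in)
  qed
  qed
qed

lemma acyc: "acyclic_graph (AA k) tlf hdf"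
proof (rule acyc_rank[where r = rk], intro ballI)
  fix a assume "a \<in> AA k"
  then show "rk (tlf a) < rk (hdf a)" by (cases rule: AA_cases) simp_all
qed

lemma single_path: "a \<in> B \<Longrightarrow> tail a \<noteq> head a \<Longrightarrow> is_path B tail head [a]"
  by (simp add: is_path_def is_walk_def)

lemma two_path: "a \<in> B \<Longrightarrow> b \<in> B \<Longrightarrow> head a = tail b \<Longrightarrow> distinct [tail a, head a, head b]
   \<Longrightarrow> is_path B tail head [a, b]"
  unfolding is_path_def is_walk_def by (auto simp: nth_Cons')

lemma lam_tok:
  assumes "k \<ge> 1" "i < 2*k-1"
  shows "k \<le> temporal_lambda (AA k) tlf hdf tauf 0 (tok i)"
proof (rule lambda_ge[where P = "\<lambda>j. if j = 0 then [early i] else [late i (j-1)]"])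
  show "finite (AA k)" using network unfolding temporal_network_def by blast
  show "\<forall>j<k. is_st_path (AA k) tlf hdf 0 (tok i) (if j = 0 then [early i] else [late i (j-1)]) \<and>
     tau_respecting tauf (if j = 0 then [early i] else [late i (j-1)])"
    using assms by (auto simp: is_st_path_def tau_respecting_def intro!: single_path early_in late_in)
  show "\<forall>j<k. \<forall>j'<k. j \<noteq> j' \<longrightarrow> set (if j = 0 then [early i] else [late i (j-1)]) \<inter>
      set (if j' = 0 then [early i] else [late i (j'-1)]) = {}"
    by auto
qed

lemma lam_y:
  assumes "k \<ge> 1" "n \<in> Fam k"
  shows "k \<le> temporal_lambda (AA k) tlf hdf tauf 0 (ysub n)"
proof -
  have D: "set_decode n \<subseteq> {..<2*k-1}" "card (set_decode n) = k" "finite (set_decode n)"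
    using Fam_dec[OF assms(2)] by auto
  obtain h where h: "bij_betw h {0..<k} (set_decode n)"
    using ex_bij_betw_nat_finite[OF D(3)] D(2) by auto
  have hin: "\<And>j. j < k \<Longrightarrow> h j \<in> set_decode n" using h by (auto dest: bij_betwE)
  have hinj: "\<And>j j'. j < k \<Longrightarrow> j' < k \<Longrightarrow> h j = h j' \<Longrightarrow> j = j'"
    using h unfolding bij_betw_def inj_on_def by auto
  show ?thesis
  proof (rule lambda_ge[where P = "\<lambda>j. [early (h j), mid (h j) n]"])
    show "finite (AA k)" using network unfolding temporal_network_def by blast
    show "\<forall>j<k. is_st_path (AA k) tlf hdf 0 (ysub n) [early (h j), mid (h j) n] \<and>
       tau_respecting tauf [early (h j), mid (h j) n]"
    proof (intro allI impI conjI)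
      fix j assume j: "j < k"
      have "early (h j) \<in> AA k" "mid (h j) n \<in> AA k"
        using hin[OF j] D(1) assms(2) by (auto intro!: early_in mid_in)
      then show "is_st_path (AA k) tlf hdf 0 (ysub n) [early (h j), mid (h j) n]"
        unfolding is_st_path_def by (auto intro!: two_path)
      show "tau_respecting tauf [early (h j), mid (h j) n]" by (simp add: tau_respecting_def)
    qed
    show "\<forall>j<k. \<forall>j'<k. j \<noteq> j' \<longrightarrow> set [early (h j), mid (h j) n] \<inter> set [early (h j'), mid (h j') n] = {}"
      using hinj by auto
  qed
qed


lemma in_arc:
  assumes "spanning_arborescence (VV k) 0 (AA k) tlf hdf A1" "v \<in> VV k"
  obtains a where "a \<in> A1" "a \<in> AA k" "hdf a = v"
proof -
  have "card {a\<in>A1. hdf a = v} = 1" "A1 \<subseteq> AA k"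
    using assms unfolding spanning_arborescence_def s_arborescence_def by auto
  then have "{a\<in>A1. hdf a = v} \<noteq> {}" by (metis card.empty zero_neq_one)
  then show ?thesis using that \<open>A1 \<subseteq> AA k\<close> by blast
qed

lemma arb:
  assumes k: "k \<ge> 1" and sp: "spanning_arborescence (VV k) 0 (AA k) tlf hdf A1"
    and tr: "tau_respecting_arborescence 0 A1 tlf hdf tauf"
  shows "k \<le> card {i. i < 2*k-1 \<and> early i \<in> A1}"
proof (rule ccontr)
  let ?E = "{i. i < 2*k-1 \<and> early i \<in> A1}"
  assume "\<not> k \<le> card ?E"
  then have cE: "card ?E < k" by simp
  let ?C = "{..<2*k-1} - ?E"
  have "?E \<subseteq> {..<2*k-1}" by auto
  moreover have "finite ?E" by (rule finite_subset[of _ "{..<2*k-1}"]) auto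
  ultimately have "card ?C = card {..<2*k-1} - card ?E" using card_Diff_subset by blast
  then have "card ?C = (2*k-1) - card ?E" by simp
  then have "k \<le> card ?C" using cE by linarith
  then obtain S where S: "S \<subseteq> ?C" "card S = k" and finS: "finite S" by (rule obtain_subset_with_card_n)
  define n where "n = set_encode S"
  have "S \<subseteq> {..<2*k-1}" using S(1) by blast
  then have nF: "n \<in> Fam k" unfolding Fam_def n_def using S(2) by blast
  have Sn: "set_decode n = S" using finS n_def by simp
  obtain b where b: "b \<in> A1" "b \<in> AA k" "hdf b = ysub n" using in_arc[OF sp y_in[OF nF]] by blast
  obtain i where i: "b = mid i n" "i \<in> S"
    using b(2)
  proof (cases rule: AA_cases)
    case (e i) then show ?thesis using b by simp
  next
    case (l i j) then show ?thesis using b by simp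
  next
    case (m n' i)
    then have "n' = n" using b by simp
    then show ?thesis using m that Sn by simp
  qed
  have iC: "i < 2*k-1" "early i \<notin> A1" using i S by auto
  obtain c where c: "c \<in> A1" "c \<in> AA k" "hdf c = tok i" using in_arc[OF sp tok_in[OF iC(1)]] by blast
  obtain j where j: "c = late i j"
    using c(2)
  proof (cases rule: AA_cases)
    case (e i') then show ?thesis using c iC by simp
  next
    case (l i' j) then show ?thesis using c that by simp
  next
    case (m n' i') then show ?thesis using c by simp
  qed
  have "is_path A1 tlf hdf [c, b]"
    by (rule two_path) (use b c i j in simp_all)
  then have "tau_respecting tauf [c, b]" using tr j unfolding tau_respecting_arborescence_def by simp
  then show False using i j by (simp add: tau_respecting_def)
qed


theorem theorem11:
  shows "\<forall>k::nat. k \<ge> 1 \<longrightarrow>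
    (\<exists>(V::nat set) (s::nat) (A::nat set) (tail::nat \<Rightarrow> nat) (head::nat \<Rightarrow> nat) (\<tau>::nat \<Rightarrow> nat).
       temporal_network V s A tail head \<and>
       acyclic_graph A tail head \<and>
       (\<forall>v\<in>V. temporal_lambda A tail head \<tau> s v \<ge> k) \<and>
       \<not> (\<exists>A1 A2. spanning_arborescence V s A tail head A1 \<and>
                  tau_respecting_arborescence s A1 tail head \<tau> \<and>
                  spanning_arborescence V s A tail head A2 \<and>
                  tau_respecting_arborescence s A2 tail head \<tau> \<and>
                  A1 \<inter> A2 = {}))"
proof (intro allI impI)
  fix k :: nat assume k: "k \<ge> 1"
  have lam: "\<forall>v\<in>VV k. temporal_lambda (AA k) tlf hdf tauf 0 v \<ge> k"
  proof
    fix v assume "v \<in> VV k"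
    then show "temporal_lambda (AA k) tlf hdf tauf 0 v \<ge> k"
      unfolding VV_def using lam_tok[OF k] lam_y[OF k] by blast
  qed
  have no: "\<not> (\<exists>A1 A2. spanning_arborescence (VV k) 0 (AA k) tlf hdf A1 \<and>
                  tau_respecting_arborescence 0 A1 tlf hdf tauf \<and>
                  spanning_arborescence (VV k) 0 (AA k) tlf hdf A2 \<and>
                  tau_respecting_arborescence 0 A2 tlf hdf tauf \<and>
                  A1 \<inter> A2 = {})"
  proof
    assume "\<exists>A1 A2. spanning_arborescence (VV k) 0 (AA k) tlf hdf A1 \<and>
                  tau_respecting_arborescence 0 A1 tlf hdf tauf \<and>
                  spanning_arborescence (VV k) 0 (AA k) tlf hdf A2 \<and>
                  tau_respecting_arborescence 0 A2 tlf hdf tauf \<and>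
                  A1 \<inter> A2 = {}"
    then obtain A1 A2 where a1: "spanning_arborescence (VV k) 0 (AA k) tlf hdf A1"
        "tau_respecting_arborescence 0 A1 tlf hdf tauf"
      and a2: "spanning_arborescence (VV k) 0 (AA k) tlf hdf A2"
        "tau_respecting_arborescence 0 A2 tlf hdf tauf"
      and d: "A1 \<inter> A2 = {}" by blast
    let ?E1 = "{i. i < 2*k-1 \<and> early i \<in> A1}"
    let ?E2 = "{i. i < 2*k-1 \<and> early i \<in> A2}"
    have c1: "k \<le> card ?E1" using arb[OF k a1] .
    have c2: "k \<le> card ?E2" using arb[OF k a2] .
    have f1: "finite ?E1" by (rule finite_subset[of _ "{..<2*k-1}"]) auto
    have f2: "finite ?E2" by (rule finite_subset[of _ "{..<2*k-1}"]) auto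
    have dj: "?E1 \<inter> ?E2 = {}" using d by blast
    have "card (?E1 \<union> ?E2) = card ?E1 + card ?E2" using card_Un_disjoint[OF f1 f2 dj] .
    moreover have "card (?E1 \<union> ?E2) \<le> card {..<2*k-1}" by (rule card_mono) auto
    ultimately show False using c1 c2 k by simp
  qed
  show "\<exists>(V::nat set) (s::nat) (A::nat set) (tail::nat \<Rightarrow> nat) (head::nat \<Rightarrow> nat) (\<tau>::nat \<Rightarrow> nat).
       temporal_network V s A tail head \<and>
       acyclic_graph A tail head \<and>
       (\<forall>v\<in>V. temporal_lambda A tail head \<tau> s v \<ge> k) \<and>
       \<not> (\<exists>A1 A2. spanning_arborescence V s A tail head A1 \<and>
                  tau_respecting_arborescence s A1 tail head \<tau> \<and>
                  spanning_arborescence V s A tail head A2 \<and>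
                  tau_respecting_arborescence s A2 tail head \<tau> \<and>
                  A1 \<inter> A2 = {})"
    using network[of k] acyc[of k] lam no by blast
qed

end
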